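(* Let $p$ be an odd prime, $t,s$ positive integers with $p\nmid s$, $r=p^t$, $q=r^s$. Let $\eta$ be the quadratic multiplicative character of $\mathbb{F}_r$ (with $\eta(0)=0$), let $\varphi$ be a nontrivial multiplicative character of $\mathbb{F}_q$, and let $\overline{\varphi}^*$ denote the restriction of $\overline{\varphi}$ to $\mathbb{F}_r^*$. Put $$A=\sum_{x\in\mathbb{F}_q^*}\varphi(x)\,\eta(\mathrm{Tr}_{q/r}(x+1)).$$ Then $|A|=\sqrt q$ if the character $\eta\overline{\varphi}^*$ of $\mathbb{F}_r^*$ is nontrivial, and $|A|=\sqrt{q}/\sqrt{r}$ if $\eta\overline{\varphi}^*$ is trivial.
   Context: $\mathrm{Tr}_{q/r}$ is the trace map from $\mathbb{F}_q$ to $\mathbb{F}_r$. A multiplicative character of $\mathbb{F}_q$ is a homomorphism $\mathbb{F}_q^*\to\mathbb{C}^*$; $\overline{\varphi}$ is its complex conjugate; it is trivial if identically $1$. *)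

theory Defs
  imports Complex_Main "HOL-Computational_Algebra.Primes"
begin

text \<open>Finite field F_q is modelled as a finite field type 'a with CARD('a) = q.
  The subfield F_r (r = p^t, q = r^s) is the set of fixed points of x \<mapsto> x^r.\<close>

definition subfield_r :: "nat \<Rightarrow> 'a::{finite,field} set" where
  "subfield_r r = {x. x ^ r = x}"

definition trace_qr :: "nat \<Rightarrow> nat \<Rightarrow> 'a::{finite,field} \<Rightarrow> 'a" where
  "trace_qr r s x = (\<Sum>i<s. x ^ (r ^ i))"

definition quad_char_r :: "nat \<Rightarrow> 'a::{finite,field} \<Rightarrow> complex" where
  "quad_char_r r y =
     (if y = 0 then 0
      else if (\<exists>z \<in> subfield_r r. z ^ 2 = y) then 1 else -1)"

definition mult_char :: "('a::{finite,field} \<Rightarrow> complex) \<Rightarrow> bool" where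
  "mult_char \<phi> \<longleftrightarrow> (\<forall>x y. x \<noteq> 0 \<longrightarrow> y \<noteq> 0 \<longrightarrow> \<phi> (x * y) = \<phi> x * \<phi> y)
                    \<and> (\<forall>x. x \<noteq> 0 \<longrightarrow> \<phi> x \<noteq> 0)"

definition trivial_char :: "('a::{finite,field} \<Rightarrow> complex) \<Rightarrow> bool" where
  "trivial_char \<phi> \<longleftrightarrow> (\<forall>x. x \<noteq> 0 \<longrightarrow> \<phi> x = 1)"

end

theory Submission
  imports Defs "HOL-Computational_Algebra.Polynomial"
begin


locale subf =
  fixes K :: "'a::field set" and psi :: "'a \<Rightarrow> complex"
  assumes finK: "finite K"
    and zeroK: "0 \<in> K" and oneK: "1 \<in> K"
    and addK: "x \<in> K \<Longrightarrow> y \<in> K \<Longrightarrow> x + y \<in> K"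
    and mulK: "x \<in> K \<Longrightarrow> y \<in> K \<Longrightarrow> x * y \<in> K"
    and negK: "x \<in> K \<Longrightarrow> - x \<in> K"
    and invK: "x \<in> K \<Longrightarrow> inverse x \<in> K"
    and psi_add: "x \<in> K \<Longrightarrow> y \<in> K \<Longrightarrow> psi (x + y) = psi x * psi y"
    and psi_norm: "x \<in> K \<Longrightarrow> norm (psi x) = 1"
    and psi_nontriv: "\<exists>b\<in>K. psi b \<noteq> 1"
begin

definition mchar :: "('a \<Rightarrow> complex) \<Rightarrow> bool" where
  "mchar \<chi> \<longleftrightarrow> (\<forall>x\<in>K-{0}. \<forall>y\<in>K-{0}. \<chi> (x * y) = \<chi> x * \<chi> y) \<and> (\<forall>x\<in>K-{0}. norm (\<chi> x) = 1)"

definition gauss :: "('a \<Rightarrow> complex) \<Rightarrow> complex" where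
  "gauss \<chi> = (\<Sum>x\<in>K-{0}. \<chi> x * psi x)"

lemma subK: "x \<in> K \<Longrightarrow> y \<in> K \<Longrightarrow> x - y \<in> K"
  using addK negK by (metis diff_conv_add_uminus)

lemma divK: "x \<in> K \<Longrightarrow> y \<in> K \<Longrightarrow> x / y \<in> K"
  using mulK invK by (metis divide_inverse)

lemma psi0: "psi 0 = 1"
proof -
  have "psi 0 = psi 0 * psi 0" using psi_add[OF zeroK zeroK] by simp
  moreover have "psi 0 \<noteq> 0" using psi_norm[OF zeroK] by auto
  ultimately show ?thesis by (metis mult_cancel_left2)
qed

lemma psi_neg: assumes "x \<in> K" shows "psi (- x) = cnj (psi x)"
proof -
  have "psi x * psi (-x) = 1" using psi_add[OF assms negK[OF assms]] psi0 by simp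
  moreover have "psi x * cnj (psi x) = 1"
    using complex_norm_square[of "psi x"] psi_norm[OF assms] by simp
  ultimately show ?thesis
    by (metis mult.left_commute mult.right_neutral mult.commute)
qed

lemma sum_psi_all: "(\<Sum>y\<in>K. psi y) = 0"
proof -
  obtain b where b: "b \<in> K" "psi b \<noteq> 1" using psi_nontriv by blast
  have "(\<Sum>y\<in>K. psi y) = (\<Sum>y\<in>K. psi (b + y))"
    by (rule sum.reindex_bij_witness[of _ "\<lambda>y. b + y" "\<lambda>y. y - b"])
       (auto simp: b addK subK)
  also have "\<dots> = psi b * (\<Sum>y\<in>K. psi y)"
    by (simp add: sum_distrib_left psi_add b)
  finally have "(psi b - 1) * (\<Sum>y\<in>K. psi y) = 0" by (simp add: algebra_simps)
  thus ?thesis using b by simp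
qed

lemma add_orth: assumes "a \<in> K" "a \<noteq> 0" shows "(\<Sum>x\<in>K. psi (a * x)) = 0"
proof -
  have "(\<Sum>x\<in>K. psi (a * x)) = (\<Sum>y\<in>K. psi y)"
    by (rule sum.reindex_bij_witness[of _ "\<lambda>y. y / a" "\<lambda>x. a * x"])
       (auto simp: assms mulK divK)
  thus ?thesis using sum_psi_all by simp
qed

lemma add_orth': assumes "a \<in> K" "a \<noteq> 0" shows "(\<Sum>x\<in>K-{0}. psi (a * x)) = -1"
proof -
  have "(\<Sum>x\<in>K. psi (a * x)) = psi (a * 0) + (\<Sum>x\<in>K-{0}. psi (a * x))"
    using finK zeroK by (simp add: sum.remove)
  hence "1 + (\<Sum>x\<in>K-{0}. psi (a * x)) = 0" using add_orth[OF assms] psi0 by simp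
  thus ?thesis by (simp add: add_eq_0_iff)
qed

lemma mchar_one: assumes "mchar \<chi>" shows "\<chi> 1 = 1"
proof -
  have "\<chi> 1 = \<chi> 1 * \<chi> 1" using assms oneK unfolding mchar_def by (metis DiffI one_neq_zero singletonD mult_1)
  moreover have "norm (\<chi> 1) = 1" using assms oneK unfolding mchar_def by simp
  hence "\<chi> 1 \<noteq> 0" by auto
  ultimately show ?thesis by (metis mult_cancel_left2)
qed

lemma mchar_inv: assumes "mchar \<chi>" "x \<in> K" "x \<noteq> 0" shows "\<chi> (inverse x) = cnj (\<chi> x)"
proof -
  have "\<chi> x * \<chi> (inverse x) = 1"
    using assms mchar_one[OF assms(1)] invK[OF assms(2)] unfolding mchar_def
    by (metis DiffI inverse_nonzero_iff_nonzero right_inverse singletonD)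
  moreover have "\<chi> x * cnj (\<chi> x) = 1"
    using complex_norm_square[of "\<chi> x"] assms unfolding mchar_def by simp
  ultimately show ?thesis
    by (metis mult.left_commute mult.right_neutral mult.commute)
qed

lemma mult_orth: assumes "mchar \<chi>" "c \<in> K" "c \<noteq> 0" "\<chi> c \<noteq> 1"
  shows "(\<Sum>x\<in>K-{0}. \<chi> x) = 0"
proof -
  have "(\<Sum>x\<in>K-{0}. \<chi> x) = (\<Sum>x\<in>K-{0}. \<chi> (c * x))"
    by (rule sum.reindex_bij_witness[of _ "\<lambda>x. c * x" "\<lambda>y. y / c"])
       (auto simp: assms mulK divK)
  also have "\<dots> = \<chi> c * (\<Sum>x\<in>K-{0}. \<chi> x)"
    using assms unfolding mchar_def by (simp add: sum_distrib_left)
  finally have "(\<chi> c - 1) * (\<Sum>x\<in>K-{0}. \<chi> x) = 0" by (simp add: algebra_simps)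
  thus ?thesis using assms by simp
qed

lemma gauss_shift: assumes "mchar \<chi>" "a \<in> K" "a \<noteq> 0"
  shows "(\<Sum>x\<in>K-{0}. \<chi> x * psi (a * x)) = cnj (\<chi> a) * gauss \<chi>"
proof -
  have "(\<Sum>x\<in>K-{0}. \<chi> x * psi (a * x)) = (\<Sum>y\<in>K-{0}. \<chi> (y / a) * psi y)"
    by (rule sum.reindex_bij_witness[of _ "\<lambda>y. y / a" "\<lambda>x. a * x"])
       (auto simp: assms mulK divK)
  also have "\<dots> = (\<Sum>y\<in>K-{0}. cnj (\<chi> a) * (\<chi> y * psi y))"
  proof (rule sum.cong)
    fix y assume y: "y \<in> K - {0}"
    have "\<chi> (y / a) = \<chi> y * \<chi> (inverse a)"
      using assms y invK[OF assms(2)] unfolding mchar_def divide_inverse by auto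
    thus "\<chi> (y / a) * psi y = cnj (\<chi> a) * (\<chi> y * psi y)"
      using mchar_inv[OF assms] by simp
  qed simp
  finally show ?thesis by (simp add: gauss_def sum_distrib_left)
qed

lemma gauss_sq: assumes "mchar \<chi>" "c \<in> K" "c \<noteq> 0" "\<chi> c \<noteq> 1"
  shows "gauss \<chi> * cnj (gauss \<chi>) = of_nat (card K)"
proof -
  let ?K = "K - {0}"
  have "gauss \<chi> * cnj (gauss \<chi>) = (\<Sum>y\<in>?K. \<Sum>x\<in>?K. (\<chi> x * psi x) * cnj (\<chi> y * psi y))"
    by (simp add: gauss_def sum_distrib_left sum_distrib_right)
  also have "\<dots> = (\<Sum>y\<in>?K. \<Sum>z\<in>?K. \<chi> z * psi ((z - 1) * y))"
  proof (rule sum.cong[OF refl])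
    fix y assume y: "y \<in> ?K"
    have "(\<Sum>z\<in>?K. \<chi> z * psi ((z - 1) * y)) = (\<Sum>x\<in>?K. (\<chi> x * psi x) * cnj (\<chi> y * psi y))"
    proof (rule sum.reindex_bij_witness[of _ "\<lambda>x. x / y" "\<lambda>z. z * y"])
      fix z assume z: "z \<in> ?K"
      have "\<chi> (z * y) = \<chi> z * \<chi> y" using assms y z unfolding mchar_def by auto
      moreover have "\<chi> y * cnj (\<chi> y) = 1"
        using complex_norm_square[of "\<chi> y"] assms y unfolding mchar_def by simp
      moreover have "psi (z * y) * cnj (psi y) = psi ((z - 1) * y)"
      proof -
        have "(z - 1) * y = z * y + - y" by (simp add: algebra_simps)
        thus ?thesis using psi_add[of "z*y" "-y"] psi_neg[of y] y z mulK negK by auto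
      qed
      ultimately show "\<chi> (z * y) * psi (z * y) * cnj (\<chi> y * psi y) = \<chi> z * psi ((z - 1) * y)"
        by (metis (no_types, lifting) complex_cnj_mult mult.assoc mult.commute mult.left_commute mult_1)
    qed (use y in \<open>auto simp: mulK divK\<close>)
    thus "(\<Sum>x\<in>?K. (\<chi> x * psi x) * cnj (\<chi> y * psi y)) = (\<Sum>z\<in>?K. \<chi> z * psi ((z - 1) * y))" by simp
  qed
  also have "\<dots> = (\<Sum>z\<in>?K. \<chi> z * (\<Sum>y\<in>?K. psi ((z - 1) * y)))"
    by (subst sum.swap) (simp add: sum_distrib_left)
  also have "\<dots> = (\<Sum>z\<in>?K. \<chi> z * ((if z = 1 then of_nat (card K) else 0) - 1))"
  proof (rule sum.cong[OF refl])
    fix z assume z: "z \<in> ?K"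
    show "\<chi> z * (\<Sum>y\<in>?K. psi ((z - 1) * y)) = \<chi> z * ((if z = 1 then of_nat (card K) else 0) - 1)"
    proof (cases "z = 1")
      case True
      have "card ?K = card K - 1" using finK zeroK by simp
      moreover have "card K \<ge> 1" using finK zeroK by (metis One_nat_def Suc_leI card_gt_0_iff empty_iff)
      ultimately show ?thesis using True psi0 by (simp add: of_nat_diff)
    next
      case False
      thus ?thesis using add_orth'[of "z - 1"] z subK oneK by simp
    qed
  qed
  also have "\<dots> = (\<Sum>z\<in>?K. (if z = 1 then \<chi> z * of_nat (card K) else 0)) - (\<Sum>z\<in>?K. \<chi> z)"
    by (simp add: sum_subtractf[symmetric]) (rule sum.cong; auto simp: algebra_simps)
  also have "\<dots> = of_nat (card K)"
    using mult_orth[OF assms] oneK finK mchar_one[OF assms(1)] by (simp add: sum.delta)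
  finally show ?thesis .
qed

lemma gauss_norm: assumes "mchar \<chi>" "c \<in> K" "c \<noteq> 0" "\<chi> c \<noteq> 1"
  shows "norm (gauss \<chi>) = sqrt (card K)"
proof -
  have "complex_of_real ((norm (gauss \<chi>))^2) = of_nat (card K)"
    using gauss_sq[OF assms] complex_norm_square by simp
  hence "(norm (gauss \<chi>))^2 = card K"
    by (metis of_real_eq_iff of_real_of_nat_eq)
  thus ?thesis by (metis norm_ge_zero real_sqrt_unique)
qed

end



lemma roots_le:
  fixes P :: "'a::{comm_ring_1,ring_no_zero_divisors} poly"
  assumes "P \<noteq> 0" "degree P \<le> d" "\<And>x. poly P x = 0 \<longleftrightarrow> Q x"
  shows "card {x. Q x} \<le> d"
proof -
  have "{x. Q x} = {x. poly P x = 0}" using assms(3) by auto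
  thus ?thesis using card_poly_roots_bound[OF assms(1)] assms(2) by simp
qed

lemma roots_pow_eq:
  assumes "k \<ge> 1"
  shows "card {x::'a::field. x ^ k = c} \<le> k"
proof (rule roots_le[of "monom 1 k - [:c:]"])
  have "coeff (monom 1 k - [:c:]) k = 1" using assms by (simp add: coeff_pCons split: nat.split)
  thus "monom 1 k - [:c:] \<noteq> 0" by (metis coeff_0 zero_neq_one)
  show "degree (monom 1 k - [:c:]) \<le> k"
    by (rule degree_diff_le) (auto simp: degree_monom_le)
  show "poly (monom 1 k - [:c:]) x = 0 \<longleftrightarrow> x ^ k = c" for x
    by (simp add: poly_monom)
qed

lemma roots_pow_self:
  assumes "k \<ge> 2"
  shows "card {x::'a::field. x ^ k = x} \<le> k"
proof (rule roots_le[of "monom 1 k - monom 1 1"])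
  have "coeff (monom 1 k - monom 1 1) k = (1::'a)" using assms by simp
  thus "monom 1 k - monom 1 1 \<noteq> (0::'a poly)" by (metis coeff_0 zero_neq_one)
  show "degree (monom 1 k - monom (1::'a) 1) \<le> k"
    by (rule degree_diff_le) (use assms in \<open>auto intro: order.trans[OF degree_monom_le]\<close>)
  show "poly (monom 1 k - monom 1 1) x = 0 \<longleftrightarrow> x ^ k = x" for x :: 'a
    unfolding poly_diff poly_monom by simp
qed

lemma roots_trace:
  assumes "b \<ge> 2" "m \<ge> 1"
  shows "card {x::'a::field. (\<Sum>i<m. x ^ (b ^ i)) = 0} \<le> b ^ (m - 1)"
proof (rule roots_le[of "\<Sum>i<m. monom 1 (b ^ i)"])
  have "coeff (\<Sum>i<m. monom (1::'a) (b ^ i)) (b ^ (m - 1)) = (\<Sum>i<m. if i = m - 1 then 1 else 0)"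
    unfolding coeff_sum coeff_monom using assms by (intro sum.cong) auto
  also have "\<dots> = 1" using assms by (simp add: sum.delta)
  finally show "(\<Sum>i<m. monom (1::'a) (b ^ i)) \<noteq> 0" by (metis coeff_0 zero_neq_one)
  show "degree (\<Sum>i<m. monom (1::'a) (b ^ i)) \<le> b ^ (m - 1)"
  proof (rule degree_sum_le)
    fix i assume "i \<in> {..<m}"
    hence "b ^ i \<le> b ^ (m - 1)" using assms by (intro power_increasing) auto
    thus "degree (monom (1::'a) (b ^ i)) \<le> b ^ (m - 1)" using degree_monom_le order.trans by blast
  qed simp
  show "poly (\<Sum>i<m. monom 1 (b ^ i)) x = 0 \<longleftrightarrow> (\<Sum>i<m. x ^ (b ^ i)) = 0" for x :: 'a
    unfolding poly_sum poly_monom by simp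
qed

lemma card_ker_image:
  fixes f :: "'a::{finite,ab_group_add} \<Rightarrow> 'b::ab_group_add"
  assumes add: "\<And>x y. f (x + y) = f x + f y"
  shows "card (UNIV::'a set) = card {x. f x = 0} * card (range f)"
proof -
  have f0: "f 0 = 0" using add[of 0 0] by simp
  have fm: "f (x - y) = f x - f y" for x y
    using add[of "x - y" y] by (simp add: algebra_simps)
  have U: "(UNIV::'a set) = (\<Union>b\<in>range f. f -` {b})" by auto
  have "card (UNIV::'a set) = (\<Sum>b\<in>range f. card (f -` {b}))"
    by (subst U, rule card_UN_disjoint) auto
  also have "\<dots> = (\<Sum>b\<in>range f. card {x. f x = 0})"
  proof (rule sum.cong[OF refl])
    fix b assume "b \<in> range f"
    then obtain a where a: "b = f a" by auto
    have "f -` {b} = (\<lambda>x. x + a) ` {x. f x = 0}"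
    proof
      show "f -` {b} \<subseteq> (\<lambda>x. x + a) ` {x. f x = 0}"
      proof
        fix y assume "y \<in> f -` {b}"
        hence "f (y - a) = 0" using a fm by simp
        thus "y \<in> (\<lambda>x. x + a) ` {x. f x = 0}" by (intro image_eqI[of _ _ "y - a"]) auto
      qed
    qed (auto simp: add a)
    moreover have "inj (\<lambda>x::'a. x + a)" by (intro injI) simp
    ultimately show "card (f -` {b}) = card {x. f x = 0}"
      by (simp add: card_image inj_on_subset[of _ UNIV])
  qed
  finally show ?thesis by simp
qed

locale mainloc =
  fixes phi :: "'a::{finite,field} \<Rightarrow> complex" and p t s r q :: nat
  assumes p_prime: "prime p" and p_odd: "odd p" and t_pos: "t > 0" and s_pos: "s > 0"
    and s_ndvd: "\<not> p dvd s" and r_def: "r = p ^ t" and q_def: "q = r ^ s"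
    and card_q: "card (UNIV :: 'a set) = q"
    and phi_mc: "mult_char phi" and phi_nt: "\<not> trivial_char phi"
begin

abbreviation "K \<equiv> (subfield_r r :: 'a set)"
abbreviation "Tr \<equiv> (trace_qr r s :: 'a \<Rightarrow> 'a)"

lemma char_q: "of_nat q = (0::'a)"
proof -
  have "(\<Sum>x\<in>(UNIV::'a set). x + 1) = (\<Sum>x\<in>UNIV. x)"
    by (rule sum.reindex_bij_witness[of _ "\<lambda>x. x - 1" "\<lambda>x. x + 1"]) auto
  thus ?thesis using card_q by (simp add: sum.distrib)
qed

lemma CHAR_p: "CHAR('a) = p"
proof -
  have pos: "CHAR('a) > 0" by (rule finite_imp_CHAR_pos) simp
  have pr: "prime CHAR('a)" using prime_CHAR_semidom[OF pos] .
  have "CHAR('a) dvd p ^ (t * s)" using char_q of_nat_eq_0_iff_char_dvd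
    by (metis q_def r_def power_mult)
  hence "CHAR('a) dvd p" using pr prime_dvd_power by blast
  thus ?thesis using pr p_prime by (simp add: primes_dvd_imp_eq)
qed

lemma charp: "prime CHAR('a)" using CHAR_p p_prime by simp

lemma frob: "(x + y :: 'a) ^ (p ^ k) = x ^ (p ^ k) + y ^ (p ^ k)"
  by (rule freshmans_dream'[OF charp]) (simp add: CHAR_p)

lemma frob_sum: "(\<Sum>i\<in>A. f i :: 'a) ^ (p ^ k) = (\<Sum>i\<in>A. f i ^ (p ^ k))"
  by (rule freshmans_dream_sum'[OF charp]) (simp add: CHAR_p)

lemma r_pow: "r ^ i = p ^ (t * i)" by (simp add: r_def power_mult)

lemma r_odd: "odd r" using p_odd r_def by simp
lemma p_ge: "p \<ge> 3" using p_prime p_odd prime_ge_2_nat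
  by (metis dvd_refl le_antisym not_less_eq_eq numeral_2_eq_2 numeral_3_eq_3)
lemma r_ge: "r \<ge> 3"
proof -
  have "p ^ 1 \<le> p ^ t" using t_pos p_ge by (intro power_increasing) auto
  thus ?thesis using p_ge r_def by simp
qed

lemma frob_r: "(x + y :: 'a) ^ (r ^ i) = x ^ (r ^ i) + y ^ (r ^ i)"
  unfolding r_pow by (rule frob)

lemma neg_pow_odd: "odd n \<Longrightarrow> (- x :: 'a) ^ n = - (x ^ n)"
  by simp

lemma fermat: "(x::'a) ^ q = x"
proof (cases "x = 0")
  case False
  have "x * (\<Prod>y\<in>UNIV-{0}. x * y) = x * x ^ (card (UNIV :: 'a set) - 1) * \<Prod>(UNIV-{0})"
    by (simp add: prod.distrib mult_ac)
  also have "x * x ^ (card (UNIV :: 'a set) - 1) = x ^ Suc (card (UNIV :: 'a set) - 1)"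
    by (subst power_Suc) auto
  also have "Suc (card (UNIV :: 'a set) - 1) = card (UNIV :: 'a set)"
    using finite_UNIV_card_ge_0[where ?'a = 'a] by simp
  also have "(\<Prod>y\<in>UNIV-{0}. x * y) = (\<Prod>y\<in>UNIV-{0}. y)"
    by (rule prod.reindex_bij_witness[of _ "\<lambda>y. y / x" "\<lambda>y. x * y"]) (use False in auto)
  finally show ?thesis
    using card_q by simp
next
  case True
  have "q > 0" using card_q finite_UNIV_card_ge_0[where ?'a = 'a] by simp
  thus ?thesis using True by simp
qed

lemma K_iter: assumes "x \<in> K" shows "x ^ (r ^ i) = x"
proof (induction i)
  case (Suc i)
  have "x ^ (r ^ Suc i) = (x ^ (r ^ i)) ^ r" by (simp add: power_mult[symmetric] mult.commute)
  thus ?case using Suc assms by (simp add: subfield_r_def)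
qed simp

lemma zero_K: "0 \<in> K" using r_ge by (simp add: subfield_r_def)
lemma one_K: "1 \<in> K" by (simp add: subfield_r_def)
lemma add_K: "x \<in> K \<Longrightarrow> y \<in> K \<Longrightarrow> x + y \<in> K"
  using frob_r[of x y 1] by (simp add: subfield_r_def)
lemma mul_K: "x \<in> K \<Longrightarrow> y \<in> K \<Longrightarrow> x * y \<in> K"
  by (simp add: subfield_r_def power_mult_distrib)
lemma neg_K: "x \<in> K \<Longrightarrow> - x \<in> K"
  using r_odd by (simp add: subfield_r_def)
lemma inv_K: "x \<in> K \<Longrightarrow> inverse x \<in> K"
  by (simp add: subfield_r_def power_inverse)
lemma fin_K: "finite K" by simp
lemma of_nat_K: "(of_nat n :: 'a) \<in> K"
  by (induction n) (auto simp: zero_K one_K add_K)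

lemma Tr_add: "Tr (x + y) = Tr x + Tr y"
  by (simp add: trace_qr_def frob_r sum.distrib)

lemma pow_rs: "(x::'a) ^ (r ^ s) = x" using fermat q_def by simp

lemma Tr_pow_r: "Tr (x ^ r) = Tr x ^ r"
proof -
  have "Tr x ^ r = (\<Sum>i<s. (x ^ (r ^ i)) ^ (p ^ t))"
    unfolding trace_qr_def r_def by (rule frob_sum)
  also have "\<dots> = Tr (x ^ r)"
    unfolding trace_qr_def r_def by (simp add: power_mult[symmetric] mult.commute)
  finally show ?thesis by simp
qed

lemma Tr_K: "Tr x \<in> K"
proof -
  have "Tr x ^ r = (\<Sum>i<s. (x ^ (r ^ i)) ^ (p ^ t))"
    unfolding trace_qr_def r_def by (rule frob_sum)
  also have "\<dots> = (\<Sum>i<s. x ^ (r ^ Suc i))"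
    by (simp add: r_def power_mult[symmetric] mult.commute)
  also have "\<dots> = (\<Sum>i<Suc s. x ^ (r ^ i)) - x ^ (r ^ 0)"
    by (subst sum.lessThan_Suc_shift) simp
  also have "\<dots> = Tr x"
    by (simp add: trace_qr_def pow_rs)
  finally show ?thesis by (simp add: subfield_r_def)
qed

lemma Tr_scal: "c \<in> K \<Longrightarrow> Tr (c * x) = c * Tr x"
  by (simp add: trace_qr_def power_mult_distrib K_iter sum_distrib_left)

lemma Tr_one: "Tr 1 = of_nat s"
  by (simp add: trace_qr_def)

lemma card_K_Tr: "card K = r \<and> card {x. Tr x = 0} = r ^ (s - 1) \<and> range Tr = K"
proof -
  define f where "f x = x ^ r - x" for x :: 'a
  have fadd: "f (x + y) = f x + f y" for x y
    using frob_r[of x y 1] by (simp add: f_def)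
  have kerf: "{x. f x = 0} = K" by (auto simp: f_def subfield_r_def)
  have "range f \<subseteq> {x. Tr x = 0}"
  proof
    fix y assume "y \<in> range f"
    then obtain x where "y = f x" by auto
    moreover have "Tr (x ^ r) = Tr x" using Tr_pow_r Tr_K by (simp add: subfield_r_def)
    moreover have "Tr (x ^ r - x) = Tr (x ^ r) - Tr x"
      using Tr_add[of "x ^ r - x" x] by simp
    ultimately show "y \<in> {x. Tr x = 0}" by (simp add: f_def)
  qed
  hence c1: "card (range f) \<le> card {x. Tr x = 0}" by (intro card_mono) auto
  have c2: "card {x. Tr x = 0} \<le> r ^ (s - 1)"
    unfolding trace_qr_def by (rule roots_trace) (use r_ge s_pos in auto)
  have c3: "card K \<le> r" using roots_pow_self[of r] r_ge by (simp add: subfield_r_def)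
  have eq: "q = card K * card (range f)"
    using card_ker_image[of f] fadd kerf card_q by simp
  have rs: "q = r * r ^ (s - 1)" using q_def s_pos by (cases s) auto
  have fpos: "card (range f) > 0" by (simp add: card_gt_0_iff)
  have cK: "card K = r"
  proof (rule ccontr)
    assume "card K \<noteq> r"
    hence "card K < r" using c3 by simp
    hence "card K * card (range f) < r * r ^ (s - 1)"
      using c1 c2 r_ge fpos by (intro mult_less_le_imp_less) auto
    thus False using eq rs by simp
  qed
  have cT: "card {x. Tr x = 0} = r ^ (s - 1)"
  proof (rule ccontr)
    assume "card {x. Tr x = 0} \<noteq> r ^ (s - 1)"
    hence "card (range f) < r ^ (s - 1)" using c1 c2 by simp
    hence "card K * card (range f) < r * r ^ (s - 1)"
      using cK r_ge by simp
    thus False using eq rs by simp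
  qed
  have "q = card {x. Tr x = 0} * card (range Tr)"
    using card_ker_image[of Tr] Tr_add card_q by simp
  hence "card (range Tr) = r" using cT rs r_ge by simp
  moreover have "range Tr \<subseteq> K" using Tr_K by auto
  ultimately have "range Tr = K" using cK by (intro card_subset_eq) auto
  thus ?thesis using cK cT by simp
qed

end



definition ecis :: "nat \<Rightarrow> nat \<Rightarrow> complex" where
  "ecis p k = cis (2 * pi * real k / real p)"

lemma ecis_add: "ecis p (m + n) = ecis p m * ecis p n"
  by (simp add: ecis_def cis_mult add_divide_distrib distrib_left)

lemma ecis_mod: assumes "p > 0" shows "ecis p k = ecis p (k mod p)"
proof -
  have "k = k mod p + p * (k div p)" by simp
  hence "real k = real (k mod p) + real p * real (k div p)" by (metis of_nat_add of_nat_mult)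
  hence "2 * pi * real k / real p = 2 * pi * real (k mod p) / real p + 2 * pi * real (k div p)"
    using assms by (simp add: field_simps)
  hence "ecis p k = cis (2 * pi * real (k mod p) / real p + 2 * pi * real (k div p))"
    by (simp add: ecis_def)
  also have "\<dots> = ecis p (k mod p) * cis (2 * pi * real (k div p))"
    by (simp only: ecis_def cis_mult)
  also have "cis (2 * pi * real (k div p)) = 1" by (rule cis_multiple_2pi) simp
  finally show ?thesis by simp
qed

lemma ecis_ne1: assumes "0 < j" "j < p" shows "ecis p j \<noteq> 1"
proof
  assume "ecis p j = 1"
  hence "cos (2 * pi * real j / real p) = 1" unfolding ecis_def by (metis cis.sel(1) one_complex.sel(1))
  then obtain n :: int where n: "2 * pi * real j / real p = real_of_int n * 2 * pi"
    using cos_one_2pi_int by blast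
  have "2 * pi * (real j / real p) = 2 * pi * real_of_int n"
    using n by (simp add: mult.commute mult.left_commute)
  have "real j / real p = (2 * pi * (real j / real p)) / (2 * pi)" using pi_gt_zero by simp
  also have "\<dots> = real_of_int n" using \<open>2 * pi * (real j / real p) = 2 * pi * real_of_int n\<close> pi_gt_zero by simp
  finally have "real j / real p = real_of_int n" .
  moreover have "0 < real j / real p" "real j / real p < 1" using assms by auto
  ultimately have "0 < n" "n < 1" by simp_all
  thus False by simp
qed

context mainloc
begin

lemma fermat_p: "(of_nat k :: 'a) ^ p = of_nat k"
proof (induction k)
  case 0 show ?case using p_ge by simp
next
  case (Suc k)
  have "(of_nat k + 1 :: 'a) ^ p = of_nat k + 1" using frob[of "of_nat k" 1 1] Suc by simp
  thus ?case by (simp add: add.commute)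
qed

lemma of_nat_mod: assumes "(of_nat m :: 'a) = of_nat n" shows "m mod p = n mod p"
proof -
  have "m mod p = n mod p" if "m \<le> n" "(of_nat m :: 'a) = of_nat n" for m n
  proof (cases "m = n")
    case False
    hence "m < n" using that by simp
    hence "p dvd n - m" using of_nat_eq_iff_char_dvd[where 'a='a, of m n] that CHAR_p by simp
    thus ?thesis using mod_eq_dvd_iff_nat[of m n p] that by (metis mod_eq_dvd_iff_nat)
  qed simp
  thus ?thesis using assms by (metis nat_le_linear)
qed

lemma of_nat_eq0: "(of_nat n :: 'a) = 0 \<longleftrightarrow> p dvd n"
  using of_nat_eq_0_iff_char_dvd CHAR_p by metis

lemma prime_field: assumes "(y::'a) ^ p = y" shows "\<exists>k. of_nat k = y"
proof -
  have sub: "of_nat ` {..<p} \<subseteq> {x::'a. x ^ p = x}" using fermat_p by auto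
  have inj: "inj_on (of_nat :: nat \<Rightarrow> 'a) {..<p}"
  proof (rule inj_onI)
    fix m n assume "m \<in> {..<p}" "n \<in> {..<p}" "(of_nat m :: 'a) = of_nat n"
    thus "m = n" using of_nat_mod by fastforce
  qed
  have "card (of_nat ` {..<p} :: 'a set) = p" using card_image[OF inj] by simp
  moreover have "card {x::'a. x ^ p = x} \<le> p" using roots_pow_self[where 'a='a, of p] p_ge by simp
  moreover have "card (of_nat ` {..<p} :: 'a set) \<le> card {x::'a. x ^ p = x}" using sub by (intro card_mono) auto
  ultimately have "of_nat ` {..<p} = {x::'a. x ^ p = x}" using sub by (intro card_subset_eq) auto
  hence "y \<in> of_nat ` {..<p}" using assms by simp
  thus ?thesis by (metis imageE)
qed

definition AT :: "'a \<Rightarrow> 'a" where "AT x = (\<Sum>i<t. x ^ (p ^ i))"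

lemma AT_add: "AT (x + y) = AT x + AT y"
  by (simp add: AT_def frob sum.distrib)

lemma AT_P: assumes "x \<in> K" shows "AT x ^ p = AT x"
proof -
  have "AT x ^ (p ^ 1) = (\<Sum>i<t. (x ^ (p ^ i)) ^ (p ^ 1))"
    unfolding AT_def by (rule frob_sum)
  also have "\<dots> = (\<Sum>i<t. x ^ (p ^ Suc i))"
    by (simp add: power_mult[symmetric] mult.commute)
  also have "\<dots> = (\<Sum>i<Suc t. x ^ (p ^ i)) - x ^ (p ^ 0)"
    by (subst sum.lessThan_Suc_shift) simp
  also have "\<dots> = AT x"
    using assms by (simp add: AT_def subfield_r_def r_def[symmetric])
  finally show ?thesis by simp
qed

lemma AT_nz: "\<exists>b\<in>K. AT b \<noteq> 0"
proof (rule ccontr)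
  assume "\<not> ?thesis"
  hence "K \<subseteq> {x. (\<Sum>i<t. x ^ (p ^ i)) = 0}" by (auto simp: AT_def)
  hence "card K \<le> card {x::'a. (\<Sum>i<t. x ^ (p ^ i)) = 0}" by (intro card_mono) auto
  also have "\<dots> \<le> p ^ (t - 1)" by (rule roots_trace) (use p_ge t_pos in auto)
  also have "\<dots> < p ^ t" using p_ge t_pos by (intro power_strict_increasing) auto
  finally show False using card_K_Tr r_def by simp
qed

definition idx :: "'a \<Rightarrow> nat" where "idx y = (SOME k. of_nat k = y)"

lemma idx: assumes "y ^ p = y" shows "of_nat (idx y) = y"
  unfolding idx_def using prime_field[OF assms] by (rule someI_ex)

definition psiR :: "'a \<Rightarrow> complex" where "psiR x = ecis p (idx (AT x))"

definition psiQ :: "'a \<Rightarrow> complex" where "psiQ x = psiR (Tr x)"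

lemma psiR_add: assumes "x \<in> K" "y \<in> K" shows "psiR (x + y) = psiR x * psiR y"
proof -
  have xy: "x + y \<in> K" using add_K assms .
  have "(of_nat (idx (AT (x + y))) :: 'a) = of_nat (idx (AT x) + idx (AT y))"
    using idx[OF AT_P[OF xy]] idx[OF AT_P[OF assms(1)]] idx[OF AT_P[OF assms(2)]] AT_add by simp
  hence "idx (AT (x + y)) mod p = (idx (AT x) + idx (AT y)) mod p" by (rule of_nat_mod)
  hence "psiR (x + y) = ecis p (idx (AT x) + idx (AT y))"
    unfolding psiR_def using ecis_mod p_ge by (metis not_gr0 not_numeral_le_zero)
  thus ?thesis by (simp add: psiR_def ecis_add)
qed

lemma psiR_norm: "norm (psiR x) = 1" by (simp add: psiR_def ecis_def)

lemma psiR_nt: "\<exists>b\<in>K. psiR b \<noteq> 1"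
proof -
  obtain b where b: "b \<in> K" "AT b \<noteq> 0" using AT_nz by blast
  have "(of_nat (idx (AT b)) :: 'a) \<noteq> 0" using idx[OF AT_P[OF b(1)]] b by simp
  hence "\<not> p dvd idx (AT b)" using of_nat_eq0 by simp
  hence "0 < idx (AT b) mod p" "idx (AT b) mod p < p" using p_ge by (auto simp: dvd_eq_mod_eq_0 gr0I)
  hence "ecis p (idx (AT b) mod p) \<noteq> 1" by (rule ecis_ne1)
  hence "psiR b \<noteq> 1" unfolding psiR_def using ecis_mod p_ge by (metis not_gr0 not_numeral_le_zero)
  thus ?thesis using b by blast
qed

sublocale SR: subf K psiR
  by unfold_locales (auto simp: zero_K one_K add_K mul_K neg_K inv_K psiR_add psiR_norm psiR_nt)

sublocale SQ: subf "UNIV :: 'a set" psiQ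
proof unfold_locales
  show "psiQ (x + y) = psiQ x * psiQ y" for x y
    by (simp add: psiQ_def Tr_add psiR_add Tr_K)
  show "norm (psiQ x) = 1" for x by (simp add: psiQ_def psiR_norm)
  obtain b where "b \<in> K" "psiR b \<noteq> 1" using psiR_nt by blast
  moreover have "b \<in> range Tr" using card_K_Tr \<open>b \<in> K\<close> by simp
  ultimately show "\<exists>b\<in>UNIV. psiQ b \<noteq> 1" by (auto simp: psiQ_def)
qed auto

end



context mainloc
begin

definition h :: nat where "h = (r - 1) div 2"

lemma h2: "2 * h = r - 1" using r_odd unfolding h_def by presburger

lemma h_ge: "h \<ge> 1" using h2 r_ge by linarith

lemma K_pow1: assumes "y \<in> K" "y \<noteq> 0" shows "y ^ (r - 1) = 1"
proof -
  have "y * y ^ (r - 1) = y ^ r" using r_ge by (metis power_Suc Suc_diff_1 not_numeral_le_zero not_gr0)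
  also have "\<dots> = y" using assms by (simp add: subfield_r_def)
  finally show ?thesis using assms(2) by (metis mult_cancel_left1)
qed

lemma one_ne_neg: "(1::'a) \<noteq> - 1"
proof
  assume "(1::'a) = - 1"
  hence "(1::'a) + 1 = 0" by (metis add.right_inverse)
  hence "(of_nat 2 :: 'a) = 0" by simp
  hence "p dvd 2" using of_nat_eq0 by blast
  hence "p \<le> 2" by (rule dvd_imp_le) simp
  thus False using p_ge by simp
qed

lemma sq_char: assumes "y \<in> K" "y \<noteq> 0" shows "(\<exists>z\<in>K. z ^ 2 = y) \<longleftrightarrow> y ^ h = 1"
proof -
  have fw: "w ^ h = 1" if w: "w \<in> K" "w \<noteq> 0" "\<exists>z\<in>K. z ^ 2 = w" for w
  proof -
    obtain z where z: "z \<in> K" "z ^ 2 = w" using w(3) by blast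
    hence "z \<noteq> 0" using w(2) by auto
    hence "z ^ (r - 1) = 1" using K_pow1 z by simp
    moreover have "w ^ h = z ^ (2 * h)" using z(2) by (simp add: power_mult)
    ultimately show ?thesis using h2 by simp
  qed
  define S where "S = {w \<in> K - {0}. \<exists>z\<in>K. z ^ 2 = w}"
  define R where "R = {w \<in> K - {0}. w ^ h = 1}"
  have SR: "S \<subseteq> R" using fw by (auto simp: S_def R_def)
  have cR: "card R \<le> h"
  proof -
    have "card R \<le> card {w::'a. w ^ h = 1}" by (intro card_mono) (auto simp: R_def)
    also have "\<dots> \<le> h" using roots_pow_eq h_ge by blast
    finally show ?thesis .
  qed
  have cS: "h \<le> card S"
  proof -
    have "K - {0} \<subseteq> (\<Union>w\<in>S. {z. z ^ 2 = w})"
    proof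
      fix z assume z: "z \<in> K - {0}"
      hence "z ^ 2 \<in> S" by (auto simp: S_def mul_K power2_eq_square)
      thus "z \<in> (\<Union>w\<in>S. {z. z ^ 2 = w})" by auto
    qed
    hence "card (K - {0}) \<le> card (\<Union>w\<in>S. {z::'a. z ^ 2 = w})" by (intro card_mono) auto
    also have "\<dots> \<le> (\<Sum>w\<in>S. card {z::'a. z ^ 2 = w})" by (rule card_UN_le) simp
    also have "\<dots> \<le> (\<Sum>w\<in>S. 2)" by (intro sum_mono roots_pow_eq) simp
    finally have "card (K - {0}) \<le> 2 * card S" by simp
    moreover have "card (K - {0}) = r - 1" using card_K_Tr zero_K by simp
    ultimately show ?thesis using h2 by linarith
  qed
  have fR: "finite R" by (simp add: R_def)
  have "card S \<le> card R" using SR fR by (intro card_mono)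
  hence "card S = card R" using cR cS by linarith
  hence "S = R" using SR fR by (intro card_subset_eq)
  thus ?thesis using fw assms by (auto simp: S_def R_def)
qed

lemma eta_val: assumes "y \<in> K" "y \<noteq> 0"
  shows "quad_char_r r y = (if y ^ h = 1 then 1 else -1)"
  using sq_char[OF assms] assms by (simp add: quad_char_r_def)

lemma pow_h: assumes "y \<in> K" "y \<noteq> 0" shows "y ^ h = 1 \<or> y ^ h = -1"
proof -
  have "(y ^ h) ^ 2 = 1" using K_pow1[OF assms] h2 by (simp add: power_mult[symmetric] mult.commute)
  thus ?thesis using power2_eq_1_iff by blast
qed

abbreviation eta :: "'a \<Rightarrow> complex" where "eta \<equiv> quad_char_r r"

lemma eta0: "eta 0 = 0" by (simp add: quad_char_r_def)

lemma eta_pm: assumes "y \<in> K" "y \<noteq> 0" shows "eta y = 1 \<or> eta y = -1"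
  using eta_val[OF assms] by auto

lemma eta_mult: assumes "x \<in> K" "x \<noteq> 0" "y \<in> K" "y \<noteq> 0"
  shows "eta (x * y) = eta x * eta y"
proof -
  have xy: "x * y \<in> K" "x * y \<noteq> 0" using assms mul_K by auto
  have e: "(x * y) ^ h = x ^ h * y ^ h" by (simp add: power_mult_distrib)
  have n1: "(-1::'a) \<noteq> 1" using one_ne_neg by metis
  consider "x^h = 1" "y^h = 1" | "x^h = 1" "y^h = -1" | "x^h = -1" "y^h = 1" | "x^h = -1" "y^h = -1"
    using pow_h[OF assms(1,2)] pow_h[OF assms(3,4)] by blast
  thus ?thesis
    using eta_val[OF xy] eta_val[OF assms(1,2)] eta_val[OF assms(3,4)] e n1 one_ne_neg
    by cases simp_all
qed

lemma eta_mchar: "SR.mchar eta"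
  unfolding SR.mchar_def using eta_mult eta_pm by fastforce

lemma eta_nt: "\<exists>c\<in>K. c \<noteq> 0 \<and> eta c \<noteq> 1"
proof (rule ccontr)
  assume A: "\<not> ?thesis"
  hence "\<forall>c\<in>K - {0}. c ^ h = 1"
  proof (intro ballI)
    fix c assume c: "c \<in> K - {0}"
    hence "eta c = 1" using A by auto
    thus "c ^ h = 1" using eta_val[of c] c by (auto split: if_splits)
  qed
  hence "K - {0} \<subseteq> {c. c ^ h = 1}" by auto
  hence "card (K - {0}) \<le> card {c::'a. c ^ h = 1}" by (intro card_mono) auto
  also have "\<dots> \<le> h" using roots_pow_eq h_ge by blast
  finally show False using card_K_Tr zero_K h2 r_ge by simp
qed

lemma eta_sq: assumes "a \<in> K" "a \<noteq> 0" shows "cnj (eta a) = eta a"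
  using eta_pm[OF assms] by auto

lemma phi_mult: "x \<noteq> 0 \<Longrightarrow> y \<noteq> 0 \<Longrightarrow> phi (x * y) = phi x * phi y"
  using phi_mc by (simp add: mult_char_def)

lemma phi_pow: "x \<noteq> 0 \<Longrightarrow> phi (x ^ n) = phi x ^ n * phi 1"
  by (induction n) (auto simp: phi_mult mult.assoc mult.commute)

lemma phi_one: "phi 1 = 1"
proof -
  have "phi 1 = phi 1 * phi 1" using phi_mult[of 1 1] by simp
  moreover have "phi 1 \<noteq> 0" using phi_mc by (simp add: mult_char_def)
  ultimately show ?thesis by (metis mult_cancel_left2)
qed

lemma q_ge: "q \<ge> 3"
proof -
  have "r ^ 1 \<le> r ^ s" using s_pos r_ge by (intro power_increasing) auto
  thus ?thesis using r_ge q_def by simp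
qed

lemma phi_norm: assumes "x \<noteq> 0" shows "norm (phi x) = 1"
proof -
  have "x * x ^ (q - 1) = x * 1" using fermat[of x] q_ge by (metis power_Suc Suc_diff_1 not_numeral_le_zero not_gr0 mult_1_right)
  hence "x ^ (q - 1) = 1" using assms by simp
  hence "phi x ^ (q - 1) = 1" using phi_pow[OF assms, of "q - 1"] phi_one by simp
  thus ?thesis using power_eq_1_iff q_ge by fastforce
qed

lemma phi_mchar: "SQ.mchar phi"
  unfolding SQ.mchar_def using phi_mult phi_norm by auto

lemma phi_nt': "\<exists>c. c \<noteq> 0 \<and> phi c \<noteq> 1"
  using phi_nt by (auto simp: trivial_char_def)

definition chi :: "'a \<Rightarrow> complex" where "chi c = eta c * cnj (phi c)"

lemma chi_mchar: "SR.mchar chi"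
  unfolding SR.mchar_def chi_def
proof (intro conjI ballI)
  fix x y assume x: "x \<in> K - {0}" and y: "y \<in> K - {0}"
  show "eta (x * y) * cnj (phi (x * y)) = eta x * cnj (phi x) * (eta y * cnj (phi y))"
    using eta_mult[of x y] phi_mult[of x y] x y by simp
next
  fix x assume x: "x \<in> K - {0}"
  show "norm (eta x * cnj (phi x)) = 1"
    using eta_pm[of x] phi_norm[of x] x by (auto simp: norm_mult)
qed

lemma s'_K: "(of_nat s :: 'a) \<in> K" by (rule of_nat_K)
lemma s'_nz: "(of_nat s :: 'a) \<noteq> 0" using of_nat_eq0 s_ndvd by simp

lemma identI: assumes "a \<in> K"
  shows "(\<Sum>c\<in>K-{0}. eta c * psiR (c * a)) = eta a * SR.gauss eta"
proof (cases "a = 0")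
  case True
  obtain c where "c \<in> K" "c \<noteq> 0" "eta c \<noteq> 1" using eta_nt by blast
  hence "(\<Sum>c\<in>K-{0}. eta c) = 0" using SR.mult_orth[OF eta_mchar] by blast
  thus ?thesis using True SR.psi0 eta0 by simp
next
  case False
  have "(\<Sum>c\<in>K-{0}. eta c * psiR (c * a)) = (\<Sum>c\<in>K-{0}. eta c * psiR (a * c))"
    by (simp add: mult.commute)
  also have "\<dots> = cnj (eta a) * SR.gauss eta"
    using SR.gauss_shift[OF eta_mchar assms False] .
  finally show ?thesis using eta_sq[OF assms False] by simp
qed

lemma identII: "eta (Tr (x + 1)) * SR.gauss eta
   = (\<Sum>c\<in>K-{0}. eta c * psiR (c * of_nat s) * psiQ (c * x))"
proof -
  have "eta (Tr (x + 1)) * SR.gauss eta = (\<Sum>c\<in>K-{0}. eta c * psiR (c * Tr (x + 1)))"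
    using identI[OF Tr_K] by simp
  also have "\<dots> = (\<Sum>c\<in>K-{0}. eta c * psiR (c * of_nat s) * psiQ (c * x))"
  proof (rule sum.cong[OF refl])
    fix c assume c: "c \<in> K - {0}"
    have "Tr (c * (x + 1)) = c * Tr (x + 1)" using c Tr_scal by blast
    hence "psiR (c * Tr (x + 1)) = psiQ (c * x + c)"
      by (simp add: psiQ_def distrib_left)
    also have "\<dots> = psiQ (c * x) * psiQ c" by (rule SQ.psi_add) auto
    also have "psiQ c = psiR (c * of_nat s)"
      using Tr_scal[of c 1] c Tr_one by (simp add: psiQ_def)
    finally show "eta c * psiR (c * Tr (x + 1)) = eta c * psiR (c * of_nat s) * psiQ (c * x)"
      by simp
  qed
  finally show ?thesis .
qed

theorem main_loc:
  fixes A defines "A \<equiv> (\<Sum>x \<in> {x::'a. x \<noteq> 0}. phi x * quad_char_r r (trace_qr r s (x + 1)))"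
  shows "cmod A = (if (\<forall>c\<in>K-{0}. chi c = 1) then sqrt q / sqrt r else sqrt q)"
proof -
  let ?Gr = "SR.gauss eta" and ?Gq = "SQ.gauss phi"
  let ?B = "\<Sum>c\<in>K-{0}. chi c * psiR (of_nat s * c)"
  have nGr: "norm ?Gr = sqrt r"
    using SR.gauss_norm[OF eta_mchar] eta_nt card_K_Tr by auto
  have nGq: "norm ?Gq = sqrt q"
    using SQ.gauss_norm[OF phi_mchar] phi_nt' card_q by auto
  have Gr0: "?Gr \<noteq> 0" using nGr r_ge by auto
  have U: "{x::'a. x \<noteq> 0} = UNIV - {0}" by auto
  have "A * ?Gr = (\<Sum>x\<in>UNIV-{0}. phi x * (eta (Tr (x + 1)) * ?Gr))"
    unfolding A_def U by (simp add: sum_distrib_right mult.assoc)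
  also have "\<dots> = (\<Sum>x\<in>UNIV-{0}. \<Sum>c\<in>K-{0}. eta c * psiR (c * of_nat s) * (phi x * psiQ (c * x)))"
    unfolding identII by (simp add: sum_distrib_left mult_ac)
  also have "\<dots> = (\<Sum>c\<in>K-{0}. eta c * psiR (c * of_nat s) * (\<Sum>x\<in>UNIV-{0}. phi x * psiQ (c * x)))"
    by (subst sum.swap) (simp add: sum_distrib_left)
  also have "\<dots> = (\<Sum>c\<in>K-{0}. eta c * psiR (c * of_nat s) * (cnj (phi c) * ?Gq))"
    by (rule sum.cong[OF refl]) (subst SQ.gauss_shift[OF phi_mchar], auto)
  also have "\<dots> = ?Gq * ?B"
    by (simp add: sum_distrib_left chi_def mult_ac)
  finally have AG: "A * ?Gr = ?Gq * ?B" .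
  hence nA: "norm A = sqrt q * norm ?B / sqrt r"
    using nGr nGq Gr0 r_ge by (metis norm_mult nonzero_mult_div_cancel_right norm_eq_zero)
  show ?thesis
  proof (cases "\<forall>c\<in>K-{0}. chi c = 1")
    case True
    have "?B = (\<Sum>c\<in>K-{0}. psiR (of_nat s * c))" using True by simp
    also have "\<dots> = -1" using SR.add_orth'[OF s'_K s'_nz] .
    finally show ?thesis using nA True by simp
  next
    case False
    then obtain c where c: "c \<in> K" "c \<noteq> 0" "chi c \<noteq> 1" by blast
    have "?B = cnj (chi (of_nat s)) * SR.gauss chi"
      using SR.gauss_shift[OF chi_mchar s'_K s'_nz] .
    hence "norm ?B = sqrt r"
      using SR.gauss_norm[OF chi_mchar c] card_K_Tr chi_mchar s'_K s'_nz
      by (simp add: norm_mult SR.mchar_def)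
    thus ?thesis unfolding if_not_P[OF False] using nA r_ge by simp
  qed
qed

end


theorem mainTheorem4:
  fixes \<phi> :: "'a::{finite,field} \<Rightarrow> complex"
    and p t s r q :: nat
  assumes "prime p" "odd p" "t > 0" "s > 0" "\<not> p dvd s"
    and "r = p ^ t" "q = r ^ s" "card (UNIV :: 'a set) = q"
    and "mult_char \<phi>" "\<not> trivial_char \<phi>"
  defines "A \<equiv> (\<Sum>x \<in> {x::'a. x \<noteq> 0}. \<phi> x * quad_char_r r (trace_qr r s (x + 1)))"
  shows "cmod A = (if trivial_char (\<lambda>y. if y \<in> subfield_r r then quad_char_r r y * cnj (\<phi> y) else 1)
                    then sqrt q / sqrt r else sqrt q)"
proof -
  interpret M: mainloc \<phi> p t s r q
    using assms(1-10) by unfold_locales auto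
  have "trivial_char (\<lambda>y. if y \<in> subfield_r r then quad_char_r r y * cnj (\<phi> y) else 1)
        \<longleftrightarrow> (\<forall>c\<in>subfield_r r - {0}. M.chi c = 1)"
    by (auto simp: trivial_char_def M.chi_def)
  thus ?thesis using M.main_loc unfolding A_def by simp
qed

end
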